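(* If $T$ is a rank-one transformation and $S$ is an invertible nonsingular transformation commuting with $T$, then $S$ is measure-preserving. Thus $T$ is not squashable.
   Context: $(X,\mathcal B,\mu)$ is a standard Borel space with nonatomic $\sigma$-finite measure. An invertible measure-preserving $T$ is rank-one if there is a sequence of Rokhlin columns $C_n=\{B_n,TB_n,\dots,T^{h_n-1}B_n\}$ (pairwise disjoint sets) such that for every measurable $A$ of finite measure and $\varepsilon>0$ there is $N$ such that for all $n\ge N$ there is a union $B_n'$ of levels of $C_n$ with $\mu(A\triangle B_n')<\varepsilon$. $S$ is invertible nonsingular if it is invertible, measurable, and $\mu(A)=0\iff\mu(SA)=0$. $T$ is squashable if it commutes with an invertible nonsingular $S$ that is not measure-preserving. *)

theory Defs
  imports "HOL-Analysis.Analysis"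
begin

text \<open>A measurable isomorphism between the measurable space of M and the Borel space
  of a Polish space (given as a type of class polish_space).  Used to express that
  M lives on a standard Borel space.\<close>
definition borel_iso :: "'a measure \<Rightarrow> ('a \<Rightarrow> 'b::polish_space) \<Rightarrow> bool" where
  "borel_iso M f \<longleftrightarrow> bij_betw f (space M) UNIV \<and> f \<in> M \<rightarrow>\<^sub>M borel
      \<and> the_inv_into (space M) f \<in> borel \<rightarrow>\<^sub>M M"

definition nonatomic :: "'a measure \<Rightarrow> bool" where
  "nonatomic M \<longleftrightarrow> (\<forall>A\<in>sets M. 0 < emeasure M A \<longrightarrow>
      (\<exists>B\<in>sets M. B \<subseteq> A \<and> 0 < emeasure M B \<and> emeasure M B < emeasure M A))"

definition invertible_measurable :: "'a measure \<Rightarrow> ('a \<Rightarrow> 'a) \<Rightarrow> bool" where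
  "invertible_measurable M S \<longleftrightarrow> bij_betw S (space M) (space M) \<and> S \<in> M \<rightarrow>\<^sub>M M
      \<and> the_inv_into (space M) S \<in> M \<rightarrow>\<^sub>M M"

definition measure_preserving :: "'a measure \<Rightarrow> ('a \<Rightarrow> 'a) \<Rightarrow> bool" where
  "measure_preserving M S \<longleftrightarrow> S \<in> M \<rightarrow>\<^sub>M M \<and>
      (\<forall>A\<in>sets M. emeasure M (S -` A \<inter> space M) = emeasure M A)"

definition invertible_measure_preserving :: "'a measure \<Rightarrow> ('a \<Rightarrow> 'a) \<Rightarrow> bool" where
  "invertible_measure_preserving M T \<longleftrightarrow> invertible_measurable M T \<and> measure_preserving M T"

definition invertible_nonsingular :: "'a measure \<Rightarrow> ('a \<Rightarrow> 'a) \<Rightarrow> bool" where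
  "invertible_nonsingular M S \<longleftrightarrow> invertible_measurable M S \<and>
      (\<forall>A\<in>sets M. emeasure M A = 0 \<longleftrightarrow> emeasure M (S ` A) = 0)"

definition rokhlin_column :: "'a measure \<Rightarrow> ('a \<Rightarrow> 'a) \<Rightarrow> 'a set \<Rightarrow> nat \<Rightarrow> bool" where
  "rokhlin_column M T B h \<longleftrightarrow> B \<in> sets M \<and> B \<subseteq> space M \<and>
      disjoint_family_on (\<lambda>i. (T ^^ i) ` B) {..<h}"

definition rank_one :: "'a measure \<Rightarrow> ('a \<Rightarrow> 'a) \<Rightarrow> bool" where
  "rank_one M T \<longleftrightarrow> invertible_measure_preserving M T \<and>
     (\<exists>(B :: nat \<Rightarrow> 'a set) (h :: nat \<Rightarrow> nat).
        (\<forall>n. rokhlin_column M T (B n) (h n)) \<and>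
        (\<forall>A\<in>sets M. emeasure M A < \<infinity> \<longrightarrow>
          (\<forall>\<epsilon>>0. \<exists>N. \<forall>n\<ge>N. \<exists>I\<subseteq>{..<h n}.
             emeasure M ((A - (\<Union>i\<in>I. (T ^^ i) ` B n)) \<union> ((\<Union>i\<in>I. (T ^^ i) ` B n) - A))
               < ennreal \<epsilon>)))"

definition squashable :: "'a measure \<Rightarrow> ('a \<Rightarrow> 'a) \<Rightarrow> bool" where
  "squashable M T \<longleftrightarrow> (\<exists>S. invertible_nonsingular M S \<and> \<not> measure_preserving M S
      \<and> (\<forall>x\<in>space M. S (T x) = T (S x)))"

end

theory Submission
  imports Defs
begin


lemma im_basic:
  assumes "invertible_measurable M g"
  shows "inj_on g (space M)" "g ` space M = space M" "g \<in> M \<rightarrow>\<^sub>M M"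
    "the_inv_into (space M) g \<in> M \<rightarrow>\<^sub>M M"
  using assms unfolding invertible_measurable_def bij_betw_def by auto

lemma im_image_eq:
  assumes "invertible_measurable M g" "X \<subseteq> space M"
  shows "g ` X = the_inv_into (space M) g -` X \<inter> space M"
proof -
  note b = im_basic[OF assms(1)]
  show ?thesis
  proof (rule set_eqI, rule iffI)
    fix y assume "y \<in> g ` X"
    then obtain x where x: "x \<in> X" "y = g x" by auto
    then show "y \<in> the_inv_into (space M) g -` X \<inter> space M"
      using assms b by (auto simp: the_inv_into_f_f)
  next
    fix y assume "y \<in> the_inv_into (space M) g -` X \<inter> space M"
    then have y: "y \<in> space M" "the_inv_into (space M) g y \<in> X" by auto
    moreover have "g (the_inv_into (space M) g y) = y"
      using b y by (intro f_the_inv_into_f) auto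
    ultimately show "y \<in> g ` X" by (metis image_eqI)
  qed
qed

lemma im_image_sets:
  assumes "invertible_measurable M g" "X \<in> sets M"
  shows "g ` X \<in> sets M"
  using im_image_eq[OF assms(1) sets.sets_into_space[OF assms(2)]] im_basic(4)[OF assms(1)] assms(2)
  by (metis measurable_sets)

lemma im_image_sub:
  assumes "invertible_measurable M g" "X \<subseteq> space M"
  shows "g ` X \<subseteq> space M"
  using im_basic(2)[OF assms(1)] assms(2) by auto

lemma im_pow:
  assumes "invertible_measurable M g"
  shows "invertible_measurable M (g ^^ n)"
proof (induction n)
  case 0
  have "the_inv_into (space M) (id::'a\<Rightarrow>'a) \<in> M \<rightarrow>\<^sub>M M"
    by (subst measurable_cong[where g=id]) (auto simp: the_inv_into_f_eq)
  then show ?case by (auto simp: invertible_measurable_def id_def[symmetric] bij_betw_id)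
next
  case (Suc n)
  have bij: "bij_betw (g ^^ Suc n) (space M) (space M)"
    using assms by (intro bij_betw_funpow) (auto simp: invertible_measurable_def)
  have m: "g ^^ Suc n \<in> M \<rightarrow>\<^sub>M M"
    using Suc im_basic(3)[OF assms] by (simp add: measurable_comp)
  have eq: "\<And>x. x \<in> space M \<Longrightarrow> the_inv_into (space M) (g ^^ Suc n) x =
     (the_inv_into (space M) g \<circ> the_inv_into (space M) (g^^n)) x"
  proof -
    fix x assume x: "x \<in> space M"
    have "(g ^^ Suc n) = g^^n \<circ> g" by (rule funpow_Suc_right)
    have bg: "bij_betw g (space M) (space M)" using assms by (auto simp: invertible_measurable_def)
    have bn: "bij_betw (g^^n) (space M) (space M)" using Suc by (auto simp: invertible_measurable_def)
    show "the_inv_into (space M) (g ^^ Suc n) x =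
     (the_inv_into (space M) g \<circ> the_inv_into (space M) (g^^n)) x"
      unfolding \<open>(g ^^ Suc n) = g^^n \<circ> g\<close>
      using the_inv_into_comp[of "g^^n" g "space M" x] bg bn x by (simp add: bij_betw_def)
  qed
  have "the_inv_into (space M) (g ^^ Suc n) \<in> M \<rightarrow>\<^sub>M M"
    apply (rule measurable_cong[THEN iffD2, OF eq])
     apply assumption
    using Suc im_basic(4)[OF assms] by (auto simp: invertible_measurable_def intro: measurable_comp)
  then show ?case using bij m unfolding invertible_measurable_def by blast
qed

lemma im_inv:
  assumes "invertible_measurable M g"
  shows "invertible_measurable M (the_inv_into (space M) g)"
proof -
  note b = im_basic[OF assms]
  have bij: "bij_betw (the_inv_into (space M) g) (space M) (space M)"
    using assms by (auto simp: invertible_measurable_def intro: bij_betw_the_inv_into)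
  have inj: "inj_on (the_inv_into (space M) g) (space M)"
    using bij by (auto simp: bij_betw_def)
  have eq: "\<And>x. x \<in> space M \<Longrightarrow> the_inv_into (space M) (the_inv_into (space M) g) x = g x"
    by (rule the_inv_into_f_eq[OF inj]) (use b in \<open>auto simp: the_inv_into_f_f\<close>)
  have "the_inv_into (space M) (the_inv_into (space M) g) \<in> M \<rightarrow>\<^sub>M M"
    by (subst measurable_cong[OF eq]) (use b in auto)
  then show ?thesis using bij b unfolding invertible_measurable_def by blast
qed

lemma im_inv_simps:
  assumes "invertible_measurable M g" "x \<in> space M"
  shows "g (the_inv_into (space M) g x) = x" "the_inv_into (space M) g (g x) = x"
    "the_inv_into (space M) g x \<in> space M"
  using im_basic[OF assms(1)] assms(2)
  by (auto simp: f_the_inv_into_f the_inv_into_f_f the_inv_into_into)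

lemma im_image_inv:
  assumes "invertible_measurable M g" "X \<subseteq> space M"
  shows "g ` (the_inv_into (space M) g ` X) = X" "the_inv_into (space M) g ` (g ` X) = X"
proof -
  show "g ` (the_inv_into (space M) g ` X) = X"
    using im_inv_simps[OF assms(1)] assms(2) by (force simp: image_image)
  show "the_inv_into (space M) g ` (g ` X) = X"
    using im_inv_simps[OF assms(1)] assms(2) by (force simp: image_image)
qed

lemma im_preimage:
  assumes "invertible_measurable M g" "X \<subseteq> space M"
  shows "g -` X \<inter> space M = the_inv_into (space M) g ` X"
proof -
  have "g -` X \<inter> space M = the_inv_into (space M) g ` X"
    using im_inv_simps[OF assms(1)] assms(2) im_basic[OF assms(1)]
    by (auto simp: image_iff) (metis subsetD)
  then show ?thesis .
qed

lemma ns_inv: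
  assumes "invertible_nonsingular M g"
  shows "invertible_nonsingular M (the_inv_into (space M) g)"
proof -
  have im: "invertible_measurable M g" using assms by (simp add: invertible_nonsingular_def)
  have "emeasure M A = 0 \<longleftrightarrow> emeasure M (the_inv_into (space M) g ` A) = 0" if "A \<in> sets M" for A
  proof -
    have C: "the_inv_into (space M) g ` A \<in> sets M"
      using im_image_sets[OF im_inv[OF im] that] .
    have "A = g ` (the_inv_into (space M) g ` A)"
      using im_image_inv[OF im sets.sets_into_space[OF that]] by simp
    then show ?thesis using assms C unfolding invertible_nonsingular_def by metis
  qed
  then show ?thesis using im_inv[OF im] by (simp add: invertible_nonsingular_def)
qed

lemma commute_inv:
  assumes "invertible_measurable M S" "invertible_measurable M T"
    "\<forall>x\<in>space M. S (T x) = T (S x)"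
  shows "\<forall>x\<in>space M. the_inv_into (space M) S (T x) = T (the_inv_into (space M) S x)"
proof
  fix x assume x: "x \<in> space M"
  let ?S' = "the_inv_into (space M) S"
  have 1: "?S' x \<in> space M" using im_inv_simps[OF assms(1) x] by simp
  have 2: "T (?S' x) \<in> space M" using im_basic(2)[OF assms(2)] 1 by auto
  have "S (T (?S' x)) = T x" using assms(3) 1 im_inv_simps[OF assms(1) x] by simp
  then have "?S' (S (T (?S' x))) = ?S' (T x)" by simp
  then show "?S' (T x) = T (?S' x)" using im_inv_simps(2)[OF assms(1) 2] by simp
qed

lemma imp_image_measure:
  assumes "invertible_measure_preserving M T" "X \<in> sets M"
  shows "emeasure M (T ` X) = emeasure M X"
proof -
  have im: "invertible_measurable M T" and mp: "measure_preserving M T"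
    using assms(1) by (auto simp: invertible_measure_preserving_def)
  have TX: "T ` X \<in> sets M" by (rule im_image_sets[OF im assms(2)])
  have "T -` (T ` X) \<inter> space M = X"
    using im_basic[OF im] sets.sets_into_space[OF assms(2)] by (auto simp: inj_on_def)
  then show ?thesis using mp TX unfolding measure_preserving_def by metis
qed

lemma funpow_image_Suc: "(f ^^ Suc i) ` X = f ` ((f ^^ i) ` X)"
  by (simp add: image_comp)

lemma funpow_image_add: "(f ^^ (i + j)) ` X = (f ^^ i) ` ((f ^^ j) ` X)"
  by (simp add: funpow_add image_comp)

lemma imp_pow_image_measure:
  assumes "invertible_measure_preserving M T" "X \<in> sets M"
  shows "emeasure M ((T ^^ i) ` X) = emeasure M X"
proof (induction i)
  case (Suc i)
  have im: "invertible_measurable M T" using assms(1) by (auto simp: invertible_measure_preserving_def)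
  have "(T ^^ i) ` X \<in> sets M" using im_image_sets[OF im_pow[OF im] assms(2)] .
  then show ?case using Suc imp_image_measure[OF assms(1)] by (simp only: funpow_image_Suc)
qed simp

lemma commute_image:
  assumes "invertible_measurable M U" "invertible_measurable M T"
    "\<forall>x\<in>space M. U (T x) = T (U x)" "X \<subseteq> space M"
  shows "U ` ((T ^^ i) ` X) = (T ^^ i) ` (U ` X)"
proof (induction i)
  case (Suc i)
  have sub: "(T ^^ i) ` X \<subseteq> space M"
    using im_image_sub[OF im_pow[OF assms(2)] assms(4)] .
  have "U ` ((T ^^ Suc i) ` X) = U ` T ` ((T ^^ i) ` X)" by (simp only: funpow_image_Suc)
  also have "\<dots> = T ` U ` ((T ^^ i) ` X)"
    using assms(3) sub by (force simp: image_image)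
  also have "\<dots> = (T ^^ Suc i) ` (U ` X)" using Suc by (simp only: funpow_image_Suc)
  finally show ?case .
qed simp



locale R1 = sigma_finite_measure M for M :: "'a measure" +
  fixes T :: "'a \<Rightarrow> 'a" and B :: "nat \<Rightarrow> 'a set" and h :: "nat \<Rightarrow> nat"
  assumes Timp: "invertible_measure_preserving M T"
  and col: "\<And>n. rokhlin_column M T (B n) (h n)"
  and approx: "\<And>A. A \<in> sets M \<Longrightarrow> emeasure M A < \<infinity> \<Longrightarrow>
          (\<forall>\<epsilon>>0. \<exists>N. \<forall>n\<ge>N. \<exists>I\<subseteq>{..<h n}.
             emeasure M ((A - (\<Union>i\<in>I. (T ^^ i) ` B n)) \<union> ((\<Union>i\<in>I. (T ^^ i) ` B n) - A))
               < ennreal \<epsilon>)"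
begin

definition L where "L n i = (T ^^ i) ` B n"
definition UI where "UI n I = (\<Union>i\<in>I. L n i)"

lemma Tim: "invertible_measurable M T"
  using Timp by (simp add: invertible_measure_preserving_def)

lemma B_sets: "B n \<in> sets M"
  using col[of n] by (simp add: rokhlin_column_def)

lemma L_sets[measurable]: "L n i \<in> sets M"
  unfolding L_def by (rule im_image_sets[OF im_pow[OF Tim] B_sets])

lemma L_meas: "emeasure M (L n i) = emeasure M (B n)"
  unfolding L_def by (rule imp_pow_image_measure[OF Timp B_sets])

lemma L_disj: "disjoint_family_on (L n) {..<h n}"
  using col[of n] by (simp add: rokhlin_column_def L_def[abs_def])

lemma UI_sets: "UI n I \<in> sets M" if "I \<subseteq> {..<h n}"
proof -
  have "finite I" using finite_subset[OF that] by simp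
  then show ?thesis unfolding UI_def by (intro sets.finite_UN) auto
qed

lemma sum_UI:
  assumes "X \<in> sets M" "I \<subseteq> {..<h n}"
  shows "emeasure M (X \<inter> UI n I) = (\<Sum>i\<in>I. emeasure M (X \<inter> L n i))"
proof -
  have "finite I" using finite_subset[OF assms(2)] by simp
  have d: "disjoint_family_on (\<lambda>i. X \<inter> L n i) I"
  proof -
    have "disjoint_family_on (L n) I" by (rule disjoint_family_on_mono[OF assms(2) L_disj])
    then show ?thesis unfolding disjoint_family_on_def by blast
  qed
  have "(\<Sum>i\<in>I. emeasure M (X \<inter> L n i)) = emeasure M (\<Union>i\<in>I. X \<inter> L n i)"
  proof (rule sum_emeasure)
    show "(\<lambda>i. X \<inter> L n i) ` I \<subseteq> sets M" using assms(1) L_sets by auto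
  qed (use d \<open>finite I\<close> in auto)
  moreover have "X \<inter> UI n I = (\<Union>i\<in>I. X \<inter> L n i)" unfolding UI_def by blast
  ultimately show ?thesis by simp
qed

lemma meas_UI:
  assumes "I \<subseteq> {..<h n}"
  shows "emeasure M (UI n I) = of_nat (card I) * emeasure M (B n)"
proof -
  have "emeasure M (space M \<inter> UI n I) = (\<Sum>i\<in>I. emeasure M (space M \<inter> L n i))"
    by (rule sum_UI) (use assms in auto)
  moreover have "space M \<inter> UI n I = UI n I" 
    using sets.sets_into_space[OF UI_sets[OF assms]] by blast
  moreover have "\<And>i. space M \<inter> L n i = L n i"
    using sets.sets_into_space[OF L_sets] by blast
  ultimately show ?thesis by (simp add: L_meas)
qed

lemma approx2:
  assumes "A1 \<in> sets M" "emeasure M A1 < \<infinity>" "A2 \<in> sets M" "emeasure M A2 < \<infinity>" "\<epsilon> > 0"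
  shows "\<exists>n I1 I2. I1 \<subseteq> {..<h n} \<and> I2 \<subseteq> {..<h n} \<and>
     emeasure M (A1 - UI n I1) < ennreal \<epsilon> \<and> emeasure M (UI n I1 - A1) < ennreal \<epsilon> \<and>
     emeasure M (A2 - UI n I2) < ennreal \<epsilon> \<and> emeasure M (UI n I2 - A2) < ennreal \<epsilon>"
proof -
  obtain N1 where N1: "\<And>n. n \<ge> N1 \<Longrightarrow> \<exists>I\<subseteq>{..<h n}. emeasure M ((A1 - UI n I) \<union> (UI n I - A1)) < ennreal \<epsilon>"
    using approx[OF assms(1,2)] assms(5) unfolding UI_def L_def by blast
  obtain N2 where N2: "\<And>n. n \<ge> N2 \<Longrightarrow> \<exists>I\<subseteq>{..<h n}. emeasure M ((A2 - UI n I) \<union> (UI n I - A2)) < ennreal \<epsilon>"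
    using approx[OF assms(3,4)] assms(5) unfolding UI_def L_def by blast
  obtain I1 where I1: "I1 \<subseteq> {..<h (max N1 N2)}" "emeasure M ((A1 - UI (max N1 N2) I1) \<union> (UI (max N1 N2) I1 - A1)) < ennreal \<epsilon>"
    using N1[of "max N1 N2"] by auto
  obtain I2 where I2: "I2 \<subseteq> {..<h (max N1 N2)}" "emeasure M ((A2 - UI (max N1 N2) I2) \<union> (UI (max N1 N2) I2 - A2)) < ennreal \<epsilon>"
    using N2[of "max N1 N2"] by auto
  have m: "emeasure M P < ennreal \<epsilon>" if "P \<subseteq> Q" "emeasure M Q < ennreal \<epsilon>" "Q \<in> sets M" for P Q
    using emeasure_mono[OF that(1,3)] that(2) by simp
  let ?n = "max N1 N2"
  have s1: "(A1 - UI ?n I1) \<union> (UI ?n I1 - A1) \<in> sets M" using UI_sets[OF I1(1)] assms(1) by (intro sets.Un sets.Diff)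
  have s2: "(A2 - UI ?n I2) \<union> (UI ?n I2 - A2) \<in> sets M" using UI_sets[OF I2(1)] assms(3) by (intro sets.Un sets.Diff)
  have "emeasure M (A1 - UI ?n I1) < ennreal \<epsilon>" by (rule m[OF _ I1(2) s1]) blast
  moreover have "emeasure M (UI ?n I1 - A1) < ennreal \<epsilon>" by (rule m[OF _ I1(2) s1]) blast
  moreover have "emeasure M (A2 - UI ?n I2) < ennreal \<epsilon>" by (rule m[OF _ I2(2) s2]) blast
  moreover have "emeasure M (UI ?n I2 - A2) < ennreal \<epsilon>" by (rule m[OF _ I2(2) s2]) blast
  ultimately show ?thesis using I1(1) I2(1) by blast
qed

end


lemma arith_erg:
  fixes X e b :: ennreal and p :: nat and x \<epsilon> :: real
  assumes a1: "X \<le> of_nat p * e + ennreal \<epsilon>" and a2: "of_nat p * b \<le> X + ennreal \<epsilon>"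
    and X: "X = ennreal x" and x: "4*\<epsilon> \<le> x" and e: "0<\<epsilon>" and eb: "e \<le> b"
  shows "b < \<infinity> \<and> b < 2 * e"
proof -
  have p: "p \<noteq> 0"
  proof
    assume "p = 0"
    with a1 X have "ennreal x \<le> ennreal \<epsilon>" by simp
    with e have "x \<le> \<epsilon>" by (simp add: ennreal_le_iff)
    with x e show False by simp
  qed
  have "X + ennreal \<epsilon> < \<infinity>" by (simp add: X)
  then have "of_nat p * b < \<infinity>" using a2 by (rule le_less_trans[rotated])
  then have bfin: "b < \<infinity>" using p by (auto simp add: ennreal_mult_less_top of_nat_less_top)
  then obtain \<beta> where \<beta>: "b = ennreal \<beta>" "0 \<le> \<beta>" by (cases b rule: ennreal_cases) auto
  have efin: "e < \<infinity>" using eb bfin by (rule le_less_trans)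
  then obtain \<eta> where \<eta>: "e = ennreal \<eta>" "0 \<le> \<eta>" by (cases e rule: ennreal_cases) auto
  have x0: "0 \<le> x" using x e by simp
  have r1: "of_nat p * e + ennreal \<epsilon> = ennreal (real p * \<eta> + \<epsilon>)"
    using \<eta> e by (simp add: ennreal_of_nat_eq_real_of_nat ennreal_mult ennreal_plus)
  have r2: "of_nat p * b = ennreal (real p * \<beta>)"
    using \<beta> by (simp add: ennreal_of_nat_eq_real_of_nat ennreal_mult)
  have r3: "X + ennreal \<epsilon> = ennreal (x + \<epsilon>)" using X x0 e by (simp add: ennreal_plus)
  have 1: "x \<le> real p * \<eta> + \<epsilon>"
    using a1 unfolding r1 X using \<eta> e by (subst (asm) ennreal_le_iff) auto
  have 2: "real p * \<beta> \<le> x + \<epsilon>"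
    using a2 unfolding r2 r3 using x0 e by (subst (asm) ennreal_le_iff) auto
  have "real p * (2*\<eta> - \<beta>) > 0" using 1 2 x e by (simp add: algebra_simps)
  then have "\<beta> < 2 * \<eta>" using p by (simp add: zero_less_mult_iff)
  then have "ennreal \<beta> < ennreal (2 * \<eta>)" using \<eta> \<beta> by (subst ennreal_less_iff) auto
  then show ?thesis using bfin \<beta> \<eta> by (simp add: ennreal_mult)
qed


lemma (in sigma_finite_measure) pos_fin_subset:
  assumes E: "E \<in> sets M" and pos: "0 < emeasure M E"
  shows "\<exists>F\<in>sets M. F \<subseteq> E \<and> 0 < emeasure M F \<and> emeasure M F < \<infinity>"
proof -
  obtain A :: "nat \<Rightarrow> 'a set" where A: "range A \<subseteq> sets M" "(\<Union>i. A i) = space M"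
    "\<And>i. emeasure M (A i) \<noteq> \<infinity>" "incseq A"
    apply (rule sigma_finite_incseq) by blast
  have r: "range (\<lambda>i. E \<inter> A i) \<subseteq> sets M" using A(1) E by auto
  have inc: "incseq (\<lambda>i. E \<inter> A i)" using A(4) by (auto simp: incseq_def)
  have U: "(\<Union>i. E \<inter> A i) = E" using A(2) sets.sets_into_space[OF E] by auto
  have "(SUP i. emeasure M (E \<inter> A i)) = emeasure M E"
    using SUP_emeasure_incseq[OF r inc] U by simp
  then have "\<exists>i. 0 < emeasure M (E \<inter> A i)"
  proof (rule contrapos_pp)
    assume "\<not> (\<exists>i. 0 < emeasure M (E \<inter> A i))"
    then have "\<forall>i. emeasure M (E \<inter> A i) = 0" by (simp add: not_less)
    then have "(SUP i. emeasure M (E \<inter> A i)) = 0" by simp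
    then show "(SUP i. emeasure M (E \<inter> A i)) \<noteq> emeasure M E" using pos by simp
  qed
  then obtain i where i: "0 < emeasure M (E \<inter> A i)" by blast
  have "emeasure M (E \<inter> A i) \<le> emeasure M (A i)" using A(1) by (intro emeasure_mono) auto
  moreover have "emeasure M (A i) < \<infinity>" using A(3)[of i] by (simp add: less_top)
  ultimately have "emeasure M (E \<inter> A i) < \<infinity>" by (rule le_less_trans)
  then show ?thesis using i r by blast
qed

context R1 begin

lemma Tsimps: "x \<in> space M \<Longrightarrow> T x \<in> space M"
  using im_basic(2)[OF Tim] by auto

lemma inv_step:
  assumes E: "E \<in> sets M" and N: "N \<in> null_sets M"
    and inv: "\<forall>x\<in>space M - N. (x \<in> E \<longleftrightarrow> T x \<in> E)"
    and X: "X \<in> sets M"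
  shows "emeasure M (E \<inter> T ` X) = emeasure M (E \<inter> X)"
proof -
  have sp: "E \<subseteq> space M" "X \<subseteq> space M" using E X sets.sets_into_space by auto
  have inj: "inj_on T (space M)" by (rule im_basic(1)[OF Tim])
  have "emeasure M (E \<inter> X) = emeasure M (T ` (E \<inter> X))"
    using imp_image_measure[OF Timp] E X by simp
  also have "T ` (E \<inter> X) = T ` E \<inter> T ` X"
    using inj sp by (intro inj_on_image_Int) auto
  also have "emeasure M (T ` E \<inter> T ` X) = emeasure M (E \<inter> T ` X)"
  proof (rule emeasure_eq_AE)
    have TN: "T ` N \<in> null_sets M"
      using N imp_image_measure[OF Timp] im_image_sets[OF Tim] by (auto simp: null_sets_def)
    show "AE x in M. (x \<in> T ` E \<inter> T ` X) = (x \<in> E \<inter> T ` X)"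
    proof (rule AE_I'[OF TN])
      have "x \<in> T ` E \<longleftrightarrow> x \<in> E" if x: "x \<in> space M" "x \<notin> T ` N" for x
      proof -
      let ?y = "the_inv_into (space M) T x"
      have y: "?y \<in> space M" "T ?y = x" using im_inv_simps[OF Tim x(1)] by auto
      have yN: "?y \<notin> N"
      proof
        assume "?y \<in> N" then have "T ?y \<in> T ` N" by (rule imageI)
        with y x(2) show False by simp
      qed
      have "x \<in> T ` E \<longleftrightarrow> ?y \<in> E"
      proof
        assume "x \<in> T ` E"
        then obtain z where z: "z \<in> E" "x = T z" by blast
        have "z = ?y" by (rule inj_onD[OF inj]) (use z y sp in auto)
        then show "?y \<in> E" using z by simp
      next
        assume "?y \<in> E" then have "T ?y \<in> T ` E" by (rule imageI)
        then show "x \<in> T ` E" using y by simp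
      qed
      also have "\<dots> \<longleftrightarrow> x \<in> E" using inv y yN by auto
      finally show "x \<in> T ` E \<longleftrightarrow> x \<in> E" .
      qed
      then show "{x \<in> space M. \<not> ((x \<in> T ` E \<inter> T ` X) = (x \<in> E \<inter> T ` X))} \<subseteq> T ` N"
        by blast
    qed
    show "T ` E \<inter> T ` X \<in> sets M" using im_image_sets[OF Tim] E X by auto
    show "E \<inter> T ` X \<in> sets M" using im_image_sets[OF Tim] E X by auto
  qed
  finally show ?thesis by simp
qed

lemma inv_level:
  assumes E: "E \<in> sets M" and N: "N \<in> null_sets M"
    and inv: "\<forall>x\<in>space M - N. (x \<in> E \<longleftrightarrow> T x \<in> E)"
  shows "emeasure M (E \<inter> L n i) = emeasure M (E \<inter> B n)"
proof (induction i)
  case 0 then show ?case by (simp add: L_def)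
next
  case (Suc i)
  have "L n (Suc i) = T ` L n i" by (simp add: L_def image_comp)
  then show ?case using inv_step[OF E N inv L_sets] Suc by simp
qed

lemma level_bounds:
  assumes G: "G \<in> sets M" and N: "N \<in> null_sets M"
    and inv: "\<forall>x\<in>space M - N. (x \<in> G \<longleftrightarrow> T x \<in> G)"
    and Fx: "Fx \<in> sets M" "Fx \<subseteq> G" and I: "I \<subseteq> {..<h n}"
    and a1: "emeasure M (Fx - UI n I) < ennreal \<epsilon>" and a2: "emeasure M (UI n I - Fx) < ennreal \<epsilon>"
  shows "emeasure M Fx \<le> of_nat (card I) * emeasure M (G \<inter> B n) + ennreal \<epsilon>"
    "of_nat (card I) * emeasure M (B n) \<le> emeasure M Fx + ennreal \<epsilon>"
proof -
  have U: "UI n I \<in> sets M" by (rule UI_sets[OF I])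
  have "emeasure M Fx \<le> emeasure M ((G \<inter> UI n I) \<union> (Fx - UI n I))"
    by (rule emeasure_mono) (use Fx G U in auto)
  also have "\<dots> \<le> emeasure M (G \<inter> UI n I) + emeasure M (Fx - UI n I)"
    by (rule emeasure_subadditive) (use Fx G U in auto)
  also have "emeasure M (G \<inter> UI n I) = (\<Sum>i\<in>I. emeasure M (G \<inter> L n i))"
    by (rule sum_UI[OF G I])
  also have "\<dots> = of_nat (card I) * emeasure M (G \<inter> B n)"
    using inv_level[OF G N inv] by simp
  finally show "emeasure M Fx \<le> of_nat (card I) * emeasure M (G \<inter> B n) + ennreal \<epsilon>"
    using a1 by (meson add_left_mono less_imp_le order_trans)
  have "of_nat (card I) * emeasure M (B n) = emeasure M (UI n I)" using meas_UI[OF I] by simp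
  also have "\<dots> \<le> emeasure M (Fx \<union> (UI n I - Fx))"
    by (rule emeasure_mono) (use Fx U in auto)
  also have "\<dots> \<le> emeasure M Fx + emeasure M (UI n I - Fx)"
    by (rule emeasure_subadditive) (use Fx U in auto)
  finally show "of_nat (card I) * emeasure M (B n) \<le> emeasure M Fx + ennreal \<epsilon>"
    using a2 by (meson add_left_mono less_imp_le order_trans)
qed

end

lemma arith_fin:
  fixes e e' b :: ennreal
  assumes "e + e' = b" "b < \<infinity>" "b < 2 * e" "b < 2 * e'"
  shows False
proof -
  have "e \<le> b" "e' \<le> b" using assms(1) by (metis add.commute le_iff_add)+
  then have "e < \<infinity>" "e' < \<infinity>" using assms(2) by auto
  then obtain x y where xy: "e = ennreal x" "0 \<le> x" "e' = ennreal y" "0 \<le> y"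
    by (cases e rule: ennreal_cases; cases e' rule: ennreal_cases) auto
  have b: "b = ennreal (x + y)" using assms(1) xy by (simp add: ennreal_plus)
  have "ennreal (x + y) < ennreal (2 * x)" using assms(3) b xy by (simp add: ennreal_mult)
  then have 1: "x + y < 2 * x" using xy by (subst (asm) ennreal_less_iff) auto
  have "ennreal (x + y) < ennreal (2 * y)" using assms(4) b xy by (simp add: ennreal_mult)
  then have 2: "x + y < 2 * y" using xy by (subst (asm) ennreal_less_iff) auto
  from 1 2 show False by simp
qed

context R1 begin

lemma ergodic:
  assumes E: "E \<in> sets M" and N: "N \<in> null_sets M"
    and inv: "\<forall>x\<in>space M - N. (x \<in> E \<longleftrightarrow> T x \<in> E)"
  shows "emeasure M E = 0 \<or> emeasure M (space M - E) = 0"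
proof (rule ccontr)
  assume "\<not> ?thesis"
  then have p1: "0 < emeasure M E" and p2: "0 < emeasure M (space M - E)"
    by (auto simp: zero_less_iff_neq_zero)
  have E': "space M - E \<in> sets M" using E by auto
  have inv': "\<forall>x\<in>space M - N. (x \<in> space M - E \<longleftrightarrow> T x \<in> space M - E)"
    using inv Tsimps by auto
  obtain F where F: "F \<in> sets M" "F \<subseteq> E" "0 < emeasure M F" "emeasure M F < \<infinity>"
    using pos_fin_subset[OF E p1] by blast
  obtain F' where F': "F' \<in> sets M" "F' \<subseteq> space M - E" "0 < emeasure M F'" "emeasure M F' < \<infinity>"
    using pos_fin_subset[OF E' p2] by blast
  define m where "m = min (enn2real (emeasure M F)) (enn2real (emeasure M F'))"
  have m: "0 < m" using F(3,4) F'(3,4) by (simp add: m_def enn2real_positive_iff)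
  define \<epsilon> where "\<epsilon> = m / 4"
  have e: "0 < \<epsilon>" using m by (simp add: \<epsilon>_def)
  obtain n I I' where I: "I \<subseteq> {..<h n}" "I' \<subseteq> {..<h n}"
    "emeasure M (F - UI n I) < ennreal \<epsilon>" "emeasure M (UI n I - F) < ennreal \<epsilon>"
    "emeasure M (F' - UI n I') < ennreal \<epsilon>" "emeasure M (UI n I' - F') < ennreal \<epsilon>"
    using approx2[OF F(1) F(4) F'(1) F'(4) e] by blast
  note lb1 = level_bounds[OF E N inv F(1,2) I(1) I(3,4)]
  note lb2 = level_bounds[OF E' N inv' F'(1,2) I(2) I(5,6)]
  have XF: "emeasure M F = ennreal (enn2real (emeasure M F))" using F(4) by (simp add: less_top)
  have XF': "emeasure M F' = ennreal (enn2real (emeasure M F'))" using F'(4) by (simp add: less_top)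
  have le1: "emeasure M (E \<inter> B n) \<le> emeasure M (B n)" by (rule emeasure_mono) (auto simp: B_sets)
  have le2: "emeasure M ((space M - E) \<inter> B n) \<le> emeasure M (B n)" by (rule emeasure_mono) (auto simp: B_sets)
  have r1: "emeasure M (B n) < \<infinity> \<and> emeasure M (B n) < 2 * emeasure M (E \<inter> B n)"
    by (rule arith_erg[OF lb1(1) lb1(2) XF _ e le1]) (simp add: \<epsilon>_def m_def)
  have r2: "emeasure M (B n) < \<infinity> \<and> emeasure M (B n) < 2 * emeasure M ((space M - E) \<inter> B n)"
    by (rule arith_erg[OF lb2(1) lb2(2) XF' _ e le2]) (simp add: \<epsilon>_def m_def)
  have sum: "emeasure M (E \<inter> B n) + emeasure M ((space M - E) \<inter> B n) = emeasure M (B n)"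
  proof -
    have "emeasure M (E \<inter> B n) + emeasure M ((space M - E) \<inter> B n) =
      emeasure M ((E \<inter> B n) \<union> ((space M - E) \<inter> B n))"
      by (rule plus_emeasure) (use E B_sets in auto)
    also have "(E \<inter> B n) \<union> ((space M - E) \<inter> B n) = B n"
      using sets.sets_into_space[OF B_sets[of n]] by auto
    finally show ?thesis .
  qed
  show False using arith_fin[OF sum] r1 r2 by blast
qed

end



locale R2 = R1 +
  fixes U :: "'a \<Rightarrow> 'a"
  assumes Uns: "invertible_nonsingular M U"
    and comm: "\<forall>x\<in>space M. U (T x) = T (U x)"
begin

definition V where "V = the_inv_into (space M) U"
definition nu where "nu = distr M M V"

lemma Uim: "invertible_measurable M U"
  using Uns by (simp add: invertible_nonsingular_def)

lemma V_meas: "V \<in> M \<rightarrow>\<^sub>M M"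
  unfolding V_def by (rule im_basic(4)[OF Uim])

lemma sets_nu[simp]: "sets nu = sets M" and space_nu[simp]: "space nu = space M"
  by (simp_all add: nu_def)

lemma nu_eq: "X \<in> sets M \<Longrightarrow> emeasure nu X = emeasure M (U ` X)"
  unfolding nu_def using emeasure_distr[OF V_meas] im_image_eq[OF Uim sets.sets_into_space]
  by (simp add: V_def)

lemma UX_sets: "X \<in> sets M \<Longrightarrow> U ` X \<in> sets M"
  by (rule im_image_sets[OF Uim])

lemma U_null: "X \<in> sets M \<Longrightarrow> emeasure M X = 0 \<longleftrightarrow> emeasure M (U ` X) = 0"
  using Uns by (simp add: invertible_nonsingular_def)

lemma ac: "absolutely_continuous M nu"
  unfolding absolutely_continuous_def
proof
  fix X assume "X \<in> null_sets M"
  then have "X \<in> sets M" "emeasure M X = 0" by auto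
  then show "X \<in> null_sets nu" using U_null nu_eq by (auto simp: null_sets_def)
qed

lemma sf_nu: "sigma_finite_measure nu"
proof
  obtain A :: "nat \<Rightarrow> 'a set" where A: "range A \<subseteq> sets M" "(\<Union>i. A i) = space M"
    "\<And>i. emeasure M (A i) \<noteq> \<infinity>" "incseq A"
    apply (rule sigma_finite_incseq) by blast
  let ?C = "\<lambda>i. V ` A i"
  have Vim: "invertible_measurable M V" unfolding V_def by (rule im_inv[OF Uim])
  have C: "?C i \<in> sets M" for i using im_image_sets[OF Vim] A(1) by auto
  have UC: "U ` ?C i = A i" for i
    using im_image_inv(1)[OF Uim, of "A i"] A(1) sets.sets_into_space unfolding V_def by blast
  have "(\<Union>i. ?C i) = V ` space M" using A(2) by blast
  also have "\<dots> = space M" using im_basic(2)[OF Vim] .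
  finally have cov: "(\<Union>i. ?C i) = space M" .
  show "\<exists>A::'a set set. countable A \<and> A \<subseteq> sets nu \<and> \<Union> A = space nu \<and> (\<forall>a\<in>A. emeasure nu a \<noteq> \<infinity>)"
    apply (rule exI[of _ "range ?C"])
    using C cov UC nu_eq A(3) by auto
qed

lemma TX_sets: "X \<in> sets M \<Longrightarrow> T ` X \<in> sets M"
  by (rule im_image_sets[OF Tim])

lemma U_T_image: "X \<subseteq> space M \<Longrightarrow> U ` (T ` X) = T ` (U ` X)"
  using comm by (force simp: image_image)

lemma nu_T: "X \<in> sets M \<Longrightarrow> emeasure M (U ` (T ` X)) = emeasure M (U ` X)"
  using U_T_image[OF sets.sets_into_space] imp_image_measure[OF Timp UX_sets] by simp

lemma Tpre: "A \<in> sets M \<Longrightarrow> T -` A \<inter> space M \<in> sets M"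
  using im_basic(3)[OF Tim] by (simp add: measurable_sets)

lemma T_Tpre:
  assumes "A \<subseteq> space M" shows "T ` (T -` A \<inter> space M) = A"
proof
  show "T ` (T -` A \<inter> space M) \<subseteq> A" by auto
  show "A \<subseteq> T ` (T -` A \<inter> space M)"
  proof
    fix x assume x: "x \<in> A"
    then have "x \<in> T ` space M" using assms im_basic(2)[OF Tim] by auto
    then obtain y where "y \<in> space M" "x = T y" by auto
    then show "x \<in> T ` (T -` A \<inter> space M)" using x by auto
  qed
qed

lemma distr_T: "distr M M T = M"
proof (rule measure_eqI)
  fix A assume "A \<in> sets (distr M M T)"
  then have A: "A \<in> sets M" by simp
  have "emeasure (distr M M T) A = emeasure M (T -` A \<inter> space M)"
    by (rule emeasure_distr[OF im_basic(3)[OF Tim] A])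
  also have "\<dots> = emeasure M A"
    using Timp A unfolding invertible_measure_preserving_def measure_preserving_def by blast
  finally show "emeasure (distr M M T) A = emeasure M A" .
qed simp

lemma distr_nu_T: "distr nu M T = nu"
proof (rule measure_eqI)
  fix A assume "A \<in> sets (distr nu M T)"
  then have A: "A \<in> sets M" by simp
  have Tm: "T \<in> nu \<rightarrow>\<^sub>M M" using im_basic(3)[OF Tim] by (simp add: measurable_def)
  have "emeasure (distr nu M T) A = emeasure nu (T -` A \<inter> space M)"
    using emeasure_distr[OF Tm A] by simp
  also have "\<dots> = emeasure M (U ` (T -` A \<inter> space M))" by (rule nu_eq[OF Tpre[OF A]])
  also have "\<dots> = emeasure M (U ` (T ` (T -` A \<inter> space M)))" by (rule nu_T[OF Tpre[OF A], symmetric])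
  also have "\<dots> = emeasure M (U ` A)" using T_Tpre[OF sets.sets_into_space[OF A]] by simp
  also have "\<dots> = emeasure nu A" using nu_eq[OF A] by simp
  finally show "emeasure (distr nu M T) A = emeasure nu A" .
qed simp

definition f where "f = RN_deriv M nu"

lemma f_meas[measurable]: "f \<in> borel_measurable M"
  unfolding f_def by simp

lemma dens: "density M f = nu"
  unfolding f_def by (rule density_RN_deriv[OF ac sets_nu])

lemma nu_int: "X \<in> sets M \<Longrightarrow> emeasure M (U ` X) = (\<integral>\<^sup>+x. f x * indicator X x \<partial>M)"
  using nu_eq[of X] emeasure_density[OF f_meas, of X] dens by simp

lemma f_inv: "AE x in M. f (T x) = f x"
proof -
  have "AE x in M. RN_deriv (distr M M T) (distr nu M T) (T x) = RN_deriv M nu x"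
  proof (rule RN_deriv_distr[of T M "the_inv_into (space M) T" nu])
    show "T \<in> M \<rightarrow>\<^sub>M M" by (rule im_basic(3)[OF Tim])
    show "the_inv_into (space M) T \<in> M \<rightarrow>\<^sub>M M" by (rule im_basic(4)[OF Tim])
    show "\<forall>x\<in>space M. the_inv_into (space M) T (T x) = x" using im_inv_simps[OF Tim] by simp
    show "absolutely_continuous (distr M M T) (distr nu M T)" using ac by (simp add: distr_T distr_nu_T)
  qed simp
  then show ?thesis by (simp add: distr_T distr_nu_T f_def)
qed

lemma f_fin: "AE x in M. f x \<noteq> \<infinity>"
  unfolding f_def by (rule RN_deriv_finite[OF sf_nu ac sets_nu])

lemma f_pos: "AE x in M. f x \<noteq> 0"
proof -
  let ?Z = "{x \<in> space M. f x = 0}"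
  have Z: "?Z \<in> sets M" by measurable
  have "emeasure M (U ` ?Z) = (\<integral>\<^sup>+x. f x * indicator ?Z x \<partial>M)" by (rule nu_int[OF Z])
  also have "\<dots> = (\<integral>\<^sup>+x. 0 \<partial>M)"
    by (rule nn_integral_cong) (auto simp: indicator_def)
  finally have "emeasure M ?Z = 0" using U_null[OF Z] by simp
  then show ?thesis by (subst AE_iff_measurable[OF Z]) auto
qed

lemma ennreal_pos_ex: "0 < (y::ennreal) \<Longrightarrow> \<exists>k. ennreal (1 / real (Suc k)) < y"
proof (cases y rule: ennreal_cases)
  case (real r)
  assume "0 < y"
  then have "0 < r" using real by simp
  then obtain k where "inverse (real (Suc k)) < r" using reals_Archimedean by blast
  then have "ennreal (1 / real (Suc k)) < ennreal r" using \<open>0 < r\<close> by (simp add: ennreal_lessI divide_inverse)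
  then show ?thesis using real by blast
next
  case top then show ?thesis by (auto intro!: exI[of _ 0])
qed

lemma ennreal_fin_ex: "(y::ennreal) \<noteq> \<infinity> \<Longrightarrow> \<exists>k. y < ennreal (real k)"
proof (cases y rule: ennreal_cases)
  case (real r)
  obtain k where k: "r < real k" using reals_Archimedean2 by blast
  have "ennreal r < ennreal (real k)" using k real by (intro ennreal_lessI) auto
  then show ?thesis using real by blast
qed simp

lemma erg_seq:
  assumes pos: "0 < emeasure M (space M)" and E: "\<And>k. E k \<in> sets M" and N: "N \<in> null_sets M"
    and inv: "\<And>k. \<forall>x\<in>space M - N. (x \<in> E k \<longleftrightarrow> T x \<in> E k)"
    and cov: "AE x in M. \<exists>k::nat. x \<in> E k"
  shows "\<exists>k. AE x in M. x \<in> E k"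
proof -
  have "\<exists>k. 0 < emeasure M (E k)"
  proof (rule ccontr)
    assume "\<not> (\<exists>k. 0 < emeasure M (E k))"
    then have "\<And>k. E k \<in> null_sets M" using E by (auto simp: null_sets_def zero_less_iff_neq_zero)
    then have "AE x in M. \<forall>k. x \<notin> E k" by (simp add: AE_all_countable AE_not_in)
    with cov have "AE x in M. False" by eventually_elim auto
    then show False using pos by (simp add: eventually_False ae_filter_eq_bot_iff)
  qed
  then obtain k where k: "0 < emeasure M (E k)" by blast
  from ergodic[OF E N inv, of k] k have "emeasure M (space M - E k) = 0" by auto
  then have "AE x in M. x \<in> E k"
    by (subst AE_iff_measurable[of "space M - E k"]) (use E in auto)
  then show ?thesis by blast
qed

lemma sandwich:
  assumes pos: "0 < emeasure M (space M)"
  shows "\<exists>a A'. 0 < a \<and> 0 \<le> A' \<and> (AE x in M. ennreal a \<le> f x \<and> f x \<le> ennreal A')"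
proof -
  from f_inv obtain N where N: "{x \<in> space M. \<not> f (T x) = f x} \<subseteq> N" "emeasure M N = 0" "N \<in> sets M"
    by (rule AE_E)
  have Nn: "N \<in> null_sets M" using N by auto
  have fT: "\<And>x. x \<in> space M - N \<Longrightarrow> f (T x) = f x" using N(1) by auto
  define E where "E k = {x \<in> space M. ennreal (1 / real (Suc k)) < f x}" for k
  define G where "G k = {x \<in> space M. f x < ennreal (real k)}" for k
  have Es: "\<And>k. E k \<in> sets M" unfolding E_def by measurable
  have Gs: "\<And>k. G k \<in> sets M" unfolding G_def by measurable
  have Einv: "\<forall>x\<in>space M - N. (x \<in> E k \<longleftrightarrow> T x \<in> E k)" for k
    using fT Tsimps unfolding E_def by auto
  have Ginv: "\<forall>x\<in>space M - N. (x \<in> G k \<longleftrightarrow> T x \<in> G k)" for k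
    using fT Tsimps unfolding G_def by auto
  have Ecov: "AE x in M. \<exists>k. x \<in> E k"
    using f_pos AE_space
  proof eventually_elim
    fix x assume x: "f x \<noteq> 0" "x \<in> space M"
    then obtain k where "ennreal (1 / real (Suc k)) < f x"
      using ennreal_pos_ex[of "f x"] by (auto simp: zero_less_iff_neq_zero)
    then have "x \<in> E k" using x unfolding E_def by blast
    then show "\<exists>k. x \<in> E k" by blast
  qed
  have Gcov: "AE x in M. \<exists>k. x \<in> G k"
    using f_fin AE_space
  proof eventually_elim
    fix x assume x: "f x \<noteq> \<infinity>" "x \<in> space M"
    then obtain k where "f x < ennreal (real k)" using ennreal_fin_ex[of "f x"] by blast
    then have "x \<in> G k" using x unfolding G_def by blast
    then show "\<exists>k. x \<in> G k" by blast
  qed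
  obtain k1 where k1: "AE x in M. x \<in> E k1" using erg_seq[OF pos Es Nn Einv Ecov] by blast
  obtain k2 where k2: "AE x in M. x \<in> G k2" using erg_seq[OF pos Gs Nn Ginv Gcov] by blast
  have "AE x in M. ennreal (1 / real (Suc k1)) \<le> f x \<and> f x \<le> ennreal (real k2)"
    using k1 k2 by eventually_elim (auto simp: E_def G_def)
  then show ?thesis by (intro exI[of _ "1 / real (Suc k1)"] exI[of _ "real k2"]) auto
qed

lemma bounds:
  assumes ae: "AE x in M. ennreal a \<le> f x \<and> f x \<le> ennreal A'" and X: "X \<in> sets M"
  shows "ennreal a * emeasure M X \<le> emeasure M (U ` X)" "emeasure M (U ` X) \<le> ennreal A' * emeasure M X"
proof -
  have "ennreal a * emeasure M X = (\<integral>\<^sup>+x. ennreal a * indicator X x \<partial>M)"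
    using nn_integral_cmult_indicator[OF X] by simp
  also have "\<dots> \<le> (\<integral>\<^sup>+x. f x * indicator X x \<partial>M)"
    by (rule nn_integral_mono_AE) (use ae in \<open>eventually_elim, auto simp: indicator_def\<close>)
  also have "\<dots> = emeasure M (U ` X)" using nu_int[OF X] by simp
  finally show "ennreal a * emeasure M X \<le> emeasure M (U ` X)" .
  have "emeasure M (U ` X) = (\<integral>\<^sup>+x. f x * indicator X x \<partial>M)" using nu_int[OF X] by simp
  also have "\<dots> \<le> (\<integral>\<^sup>+x. ennreal A' * indicator X x \<partial>M)"
    by (rule nn_integral_mono_AE) (use ae in \<open>eventually_elim, auto simp: indicator_def\<close>)
  also have "\<dots> = ennreal A' * emeasure M X"
    using nn_integral_cmult_indicator[OF X] by simp
  finally show "emeasure M (U ` X) \<le> ennreal A' * emeasure M X" .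
qed

end


lemma arith_final:
  fixes p q :: nat and b b' :: ennreal and x y a A' \<epsilon> :: real
  assumes h1: "of_nat p * b' \<le> of_nat q * b' + (ennreal A' * ennreal \<epsilon> + ennreal \<epsilon>)"
    and h2: "ennreal x \<le> of_nat p * b + ennreal \<epsilon>"
    and h3: "of_nat q * b \<le> ennreal y + ennreal \<epsilon>"
    and h4: "ennreal a * b \<le> b'" and h5: "b' \<le> ennreal A' * b"
    and a: "0 < a" and A: "0 \<le> A'" and e: "0 < \<epsilon>" and y: "0 \<le> y"
    and h6: "(2 + (A'+1)/a) * \<epsilon> < x - y"
  shows False
proof -
  have aux: "0 \<le> (A'+1)/a * \<epsilon>" using a A e by simp
  have x2: "2 * \<epsilon> < x" using h6 y aux by (simp add: algebra_simps)
  have x0: "0 \<le> x" using x2 e by simp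
  have p: "p \<noteq> 0"
  proof
    assume "p = 0"
    with h2 have "ennreal x \<le> ennreal \<epsilon>" by simp
    with e have "x \<le> \<epsilon>" by (simp add: ennreal_le_iff)
    with x2 e show False by simp
  qed
  have c: "ennreal A' * ennreal \<epsilon> + ennreal \<epsilon> < \<infinity>" by (simp add: ennreal_mult_less_top)
  have bfin: "b < \<infinity>"
  proof (cases "q = 0")
    case True
    then have "of_nat p * b' \<le> ennreal A' * ennreal \<epsilon> + ennreal \<epsilon>" using h1 by simp
    then have "of_nat p * b' < \<infinity>" using c by (rule le_less_trans)
    then have "b' < \<infinity>" using p by (auto simp add: ennreal_mult_less_top of_nat_less_top)
    then have "ennreal a * b < \<infinity>" using h4 by (rule le_less_trans[rotated])
    then show ?thesis using a by (auto simp add: ennreal_mult_less_top)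
  next
    case False
    have "ennreal y + ennreal \<epsilon> < \<infinity>" by simp
    then have "of_nat q * b < \<infinity>" using h3 by (rule le_less_trans[rotated])
    then show ?thesis using False by (auto simp add: ennreal_mult_less_top of_nat_less_top)
  qed
  then obtain \<beta> where \<beta>: "b = ennreal \<beta>" "0 \<le> \<beta>" by (cases b rule: ennreal_cases) auto
  have "b' \<le> ennreal (A' * \<beta>)" using h5 \<beta> A by (simp add: ennreal_mult)
  then have "b' < \<infinity>" using le_less_trans by fastforce
  then obtain \<beta>' where \<beta>': "b' = ennreal \<beta>'" "0 \<le> \<beta>'" by (cases b' rule: ennreal_cases) auto
  have q1: "of_nat p * b' = ennreal (real p * \<beta>')" using \<beta>' by (simp add: ennreal_of_nat_eq_real_of_nat ennreal_mult)
  have q2: "of_nat q * b' + (ennreal A' * ennreal \<epsilon> + ennreal \<epsilon>) = ennreal (real q * \<beta>' + (A' * \<epsilon> + \<epsilon>))"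
    using \<beta>' A e by (simp add: ennreal_of_nat_eq_real_of_nat ennreal_mult ennreal_plus)
  have r1: "real p * \<beta>' \<le> real q * \<beta>' + (A' * \<epsilon> + \<epsilon>)"
    using h1 unfolding q1 q2 using \<beta>' A e by (subst (asm) ennreal_le_iff) auto
  have q3: "of_nat p * b + ennreal \<epsilon> = ennreal (real p * \<beta> + \<epsilon>)"
    using \<beta> e by (simp add: ennreal_of_nat_eq_real_of_nat ennreal_mult ennreal_plus)
  have r2: "x \<le> real p * \<beta> + \<epsilon>"
    using h2 unfolding q3 using \<beta> e by (subst (asm) ennreal_le_iff) auto
  have q4: "of_nat q * b = ennreal (real q * \<beta>)" using \<beta> by (simp add: ennreal_of_nat_eq_real_of_nat ennreal_mult)
  have q5: "ennreal y + ennreal \<epsilon> = ennreal (y + \<epsilon>)" using y e by (simp add: ennreal_plus)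
  have r3: "real q * \<beta> \<le> y + \<epsilon>"
    using h3 unfolding q4 q5 using y e by (subst (asm) ennreal_le_iff) auto
  have q6: "ennreal a * b = ennreal (a * \<beta>)" using \<beta> a by (simp add: ennreal_mult)
  have r4: "a * \<beta> \<le> \<beta>'"
    using h4 unfolding q6 \<beta>' using \<beta>' by (subst (asm) ennreal_le_iff) auto
  show False
  proof (cases "p \<le> q")
    case True
    then have "real p * \<beta> \<le> real q * \<beta>" using \<beta> by (intro mult_right_mono) auto
    then show False using r2 r3 x2 h6 aux by (simp add: algebra_simps)
  next
    case False
    define d where "d = real p - real q"
    have d: "0 < d" using False by (simp add: d_def)
    have s1: "d * \<beta>' \<le> (A' + 1) * \<epsilon>" using r1 by (simp add: d_def algebra_simps)
    have "d * (a * \<beta>) \<le> d * \<beta>'" using r4 d by (intro mult_left_mono) auto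
    then have "a * (d * \<beta>) \<le> (A' + 1) * \<epsilon>" using s1 by (simp add: algebra_simps)
    then have s2: "d * \<beta> \<le> (A' + 1) * \<epsilon> / a" using a by (simp add: pos_le_divide_eq mult.commute)
    have s3: "x - y \<le> d * \<beta> + 2 * \<epsilon>" using r2 r3 by (simp add: d_def algebra_simps)
    have "(2 + (A'+1)/a) * \<epsilon> = 2 * \<epsilon> + (A' + 1) * \<epsilon> / a" by (simp add: algebra_simps)
    then show False using s2 s3 h6 by linarith
  qed
qed

context R2 begin

lemma B_sub: "B n \<subseteq> space M" using sets.sets_into_space[OF B_sets] .

lemma UL: "U ` L n i = (T ^^ i) ` (U ` B n)"
  unfolding L_def by (rule commute_image[OF Uim Tim comm B_sub])

lemma UB_sets: "U ` B n \<in> sets M" by (rule UX_sets[OF B_sets])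

lemma UB_sub: "U ` B n \<subseteq> space M" using sets.sets_into_space[OF UB_sets] .

lemma TpUB_sets: "(T ^^ k) ` (U ` B n) \<in> sets M"
  by (rule im_image_sets[OF im_pow[OF Tim] UB_sets])

lemma nu_L: "emeasure M (U ` L n i) = emeasure M (U ` B n)"
  unfolding UL by (rule imp_pow_image_measure[OF Timp UB_sets])

lemma L_shift_disj:
  assumes "0 < d" "d < h n"
  shows "L n (k + d) \<inter> L n k = {}"
proof -
  have inj: "inj_on (T ^^ k) (space M)" by (rule im_basic(1)[OF im_pow[OF Tim]])
  have "L n (k + d) = (T ^^ k) ` L n d" unfolding L_def by (rule funpow_image_add)
  moreover have "L n k = (T ^^ k) ` L n 0" unfolding L_def by simp
  moreover have "(T ^^ k) ` L n d \<inter> (T ^^ k) ` L n 0 = (T ^^ k) ` (L n d \<inter> L n 0)"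
    using inj sets.sets_into_space[OF L_sets] by (intro inj_on_image_Int[symmetric]) auto
  moreover have "L n d \<inter> L n 0 = {}"
    using L_disj[of n] assms unfolding disjoint_family_on_def by auto
  ultimately show ?thesis by simp
qed

lemma per_j:
  assumes I: "I \<subseteq> {..<h n}"
  shows "emeasure M (U ` UI n I \<inter> L n j) \<le> emeasure M (U ` B n)"
proof -
  let ?D = "U ` B n" and ?H = "h n"
  have fin: "finite I" using finite_subset[OF I] by simp
  have iH: "\<And>i. i \<in> I \<Longrightarrow> i < ?H" using I by auto
  have "U ` UI n I \<inter> L n j = (\<Union>i\<in>I. (T ^^ i) ` ?D \<inter> L n j)"
    unfolding UI_def by (auto simp: UL[symmetric])
  then have "emeasure M (U ` UI n I \<inter> L n j) = emeasure M (\<Union>i\<in>I. (T ^^ i) ` ?D \<inter> L n j)"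
    by simp
  also have "\<dots> \<le> (\<Sum>i\<in>I. emeasure M ((T ^^ i) ` ?D \<inter> L n j))"
    by (rule emeasure_subadditive_finite[OF fin]) (use TpUB_sets L_sets in auto)
  also have "\<dots> = (\<Sum>i\<in>I. emeasure M ((T ^^ ?H) ` ?D \<inter> L n (?H - i + j)))"
  proof (rule sum.cong[OF refl])
    fix i assume i: "i \<in> I"
    have inj: "inj_on (T ^^ (?H - i)) (space M)" by (rule im_basic(1)[OF im_pow[OF Tim]])
    have P: "(T ^^ i) ` ?D \<inter> L n j \<in> sets M" using TpUB_sets L_sets by auto
    have "emeasure M ((T ^^ i) ` ?D \<inter> L n j) = emeasure M ((T ^^ (?H - i)) ` ((T ^^ i) ` ?D \<inter> L n j))"
      by (rule imp_pow_image_measure[OF Timp P, symmetric])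
    also have "(T ^^ (?H - i)) ` ((T ^^ i) ` ?D \<inter> L n j) =
        (T ^^ (?H - i)) ` ((T ^^ i) ` ?D) \<inter> (T ^^ (?H - i)) ` L n j"
      by (rule inj_on_image_Int[OF inj sets.sets_into_space[OF TpUB_sets] sets.sets_into_space[OF L_sets]])
    also have "(T ^^ (?H - i)) ` ((T ^^ i) ` ?D) = (T ^^ ?H) ` ?D"
      using funpow_image_add[where f=T and i="?H - i" and j=i and X="?D"] iH[OF i] by simp
    also have "(T ^^ (?H - i)) ` L n j = L n (?H - i + j)"
      unfolding L_def by (rule funpow_image_add[symmetric])
    finally show "emeasure M ((T ^^ i) ` ?D \<inter> L n j) = emeasure M ((T ^^ ?H) ` ?D \<inter> L n (?H - i + j))" .
  qed
  also have "\<dots> = emeasure M (\<Union>i\<in>I. (T ^^ ?H) ` ?D \<inter> L n (?H - i + j))"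
  proof (rule sum_emeasure)
    show "(\<lambda>i. (T ^^ ?H) ` ?D \<inter> L n (?H - i + j)) ` I \<subseteq> sets M" using TpUB_sets L_sets by auto
    show "finite I" by (rule fin)
    show "disjoint_family_on (\<lambda>i. (T ^^ ?H) ` ?D \<inter> L n (?H - i + j)) I"
      unfolding disjoint_family_on_def
    proof (intro ballI impI)
      fix i i' assume ii: "i \<in> I" "i' \<in> I" "i \<noteq> i'"
      have key: "L n (?H - i + j) \<inter> L n (?H - i' + j) = {}"
      proof (cases "i < i'")
        case True
        have eq: "?H - i + j = (?H - i' + j) + (i' - i)" using True iH[OF ii(2)] by simp
        have dd: "0 < i' - i" "i' - i < ?H" using True iH[OF ii(2)] by auto
        show ?thesis using L_shift_disj[OF dd, of "?H - i' + j"] unfolding eq[symmetric] by simp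
      next
        case False
        then have lt: "i' < i" using ii(3) by simp
        have eq: "?H - i' + j = (?H - i + j) + (i - i')" using lt iH[OF ii(1)] by simp
        have dd: "0 < i - i'" "i - i' < ?H" using lt iH[OF ii(1)] by auto
        show ?thesis using L_shift_disj[OF dd, of "?H - i + j"] unfolding eq[symmetric] by blast
      qed
      then show "((T ^^ ?H) ` ?D \<inter> L n (?H - i + j)) \<inter> ((T ^^ ?H) ` ?D \<inter> L n (?H - i' + j)) = {}"
        by blast
    qed
  qed
  also have "\<dots> \<le> emeasure M ((T ^^ ?H) ` ?D)"
    by (rule emeasure_mono) (use TpUB_sets in auto)
  also have "\<dots> = emeasure M ?D" by (rule imp_pow_image_measure[OF Timp UB_sets])
  finally show ?thesis .
qed

lemma UUI_meas:
  assumes I: "I \<subseteq> {..<h n}"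
  shows "emeasure M (U ` UI n I) = of_nat (card I) * emeasure M (U ` B n)"
proof -
  have fin: "finite I" using finite_subset[OF I] by simp
  have inj: "inj_on U (space M)" by (rule im_basic(1)[OF Uim])
  have "U ` UI n I = (\<Union>i\<in>I. U ` L n i)" unfolding UI_def by blast
  then have "emeasure M (U ` UI n I) = emeasure M (\<Union>i\<in>I. U ` L n i)" by simp
  also have "\<dots> = (\<Sum>i\<in>I. emeasure M (U ` L n i))"
  proof (rule sum_emeasure[symmetric])
    show "(\<lambda>i. U ` L n i) ` I \<subseteq> sets M" using UX_sets[OF L_sets] by auto
    show "finite I" by (rule fin)
    show "disjoint_family_on (\<lambda>i. U ` L n i) I"
      unfolding disjoint_family_on_def
    proof (intro ballI impI)
      fix i i' assume ii: "i \<in> I" "i' \<in> I" "i \<noteq> i'"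
      have "L n i \<inter> L n i' = {}" using L_disj[of n] I ii unfolding disjoint_family_on_def by auto
      moreover have "U ` (L n i \<inter> L n i') = U ` L n i \<inter> U ` L n i'"
        by (rule inj_on_image_Int[OF inj sets.sets_into_space[OF L_sets] sets.sets_into_space[OF L_sets]])
      ultimately show "U ` L n i \<inter> U ` L n i' = {}" by simp
    qed
  qed
  also have "\<dots> = of_nat (card I) * emeasure M (U ` B n)" using nu_L by simp
  finally show ?thesis .
qed

lemma final:
  assumes a: "0 < a" and A: "0 \<le> A'"
    and bnd1: "\<And>X. X \<in> sets M \<Longrightarrow> ennreal a * emeasure M X \<le> emeasure M (U ` X)"
    and bnd2: "\<And>X. X \<in> sets M \<Longrightarrow> emeasure M (U ` X) \<le> ennreal A' * emeasure M X"
    and F: "F \<in> sets M" and fin: "emeasure M F < \<infinity>"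
  shows "emeasure M F \<le> emeasure M (U ` F)"
proof (rule ccontr)
  assume "\<not> ?thesis"
  then have lt: "emeasure M (U ` F) < emeasure M F" by simp
  define V' where "V' = U ` F"
  have V's: "V' \<in> sets M" unfolding V'_def by (rule UX_sets[OF F])
  have V'fin: "emeasure M V' < \<infinity>" using lt fin unfolding V'_def by simp
  define x where "x = enn2real (emeasure M F)"
  define y where "y = enn2real (emeasure M V')"
  have X: "emeasure M F = ennreal x" using fin by (simp add: x_def less_top)
  have Y: "emeasure M V' = ennreal y" using V'fin by (simp add: y_def less_top)
  have y0: "0 \<le> y" by (simp add: y_def)
  have yx: "y < x" using lt X Y y0 unfolding V'_def[symmetric] by (simp add: ennreal_less_iff)
  define K where "K = 2 + (A'+1)/a"
  have K: "0 < K" using a A by (simp add: K_def add_pos_nonneg)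
  define \<epsilon> where "\<epsilon> = (x - y) / (2 * K)"
  have e: "0 < \<epsilon>" using yx K by (simp add: \<epsilon>_def)
  have Ke: "K * \<epsilon> < x - y" using yx K by (simp add: \<epsilon>_def)
  obtain n I J where IJ: "I \<subseteq> {..<h n}" "J \<subseteq> {..<h n}"
    "emeasure M (F - UI n I) < ennreal \<epsilon>" "emeasure M (UI n I - F) < ennreal \<epsilon>"
    "emeasure M (V' - UI n J) < ennreal \<epsilon>" "emeasure M (UI n J - V') < ennreal \<epsilon>"
    using approx2[OF F fin V's V'fin e] by blast
  have UIs: "UI n I \<in> sets M" by (rule UI_sets[OF IJ(1)])
  have UJs: "UI n J \<in> sets M" by (rule UI_sets[OF IJ(2)])
  have h2: "ennreal x \<le> of_nat (card I) * emeasure M (B n) + ennreal \<epsilon>"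
  proof -
    have "emeasure M F \<le> emeasure M (UI n I \<union> (F - UI n I))"
      by (rule emeasure_mono) (use F UIs in auto)
    also have "\<dots> \<le> emeasure M (UI n I) + emeasure M (F - UI n I)"
      by (rule emeasure_subadditive) (use F UIs in auto)
    also have "\<dots> \<le> of_nat (card I) * emeasure M (B n) + ennreal \<epsilon>"
      using meas_UI[OF IJ(1)] IJ(3) by (simp add: add_left_mono less_imp_le)
    finally show ?thesis using X by simp
  qed
  have h3: "of_nat (card J) * emeasure M (B n) \<le> ennreal y + ennreal \<epsilon>"
  proof -
    have "of_nat (card J) * emeasure M (B n) = emeasure M (UI n J)" using meas_UI[OF IJ(2)] by simp
    also have "\<dots> \<le> emeasure M (V' \<union> (UI n J - V'))"
      by (rule emeasure_mono) (use V's UJs in auto)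
    also have "\<dots> \<le> emeasure M V' + emeasure M (UI n J - V')"
      by (rule emeasure_subadditive) (use V's UJs in auto)
    also have "\<dots> \<le> ennreal y + ennreal \<epsilon>"
      using Y IJ(6) by (simp add: add_left_mono less_imp_le)
    finally show ?thesis .
  qed
  have h4: "ennreal a * emeasure M (B n) \<le> emeasure M (U ` B n)" by (rule bnd1[OF B_sets])
  have h5: "emeasure M (U ` B n) \<le> ennreal A' * emeasure M (B n)" by (rule bnd2[OF B_sets])
  have h1: "of_nat (card I) * emeasure M (U ` B n) \<le>
      of_nat (card J) * emeasure M (U ` B n) + (ennreal A' * ennreal \<epsilon> + ennreal \<epsilon>)"
  proof -
    have UUs: "U ` UI n I \<in> sets M" by (rule UX_sets[OF UIs])
    have D1: "U ` UI n I \<inter> UI n J \<in> sets M" using UUs UJs by auto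
    have D2: "U ` (UI n I - F) \<in> sets M" using UX_sets UIs F by auto
    have D3: "V' - UI n J \<in> sets M" using V's UJs by auto
    have sub: "U ` UI n I \<subseteq> (U ` UI n I \<inter> UI n J) \<union> (U ` (UI n I - F) \<union> (V' - UI n J))"
      unfolding V'_def by blast
    have "of_nat (card I) * emeasure M (U ` B n) = emeasure M (U ` UI n I)"
      using UUI_meas[OF IJ(1)] by simp
    also have "\<dots> \<le> emeasure M ((U ` UI n I \<inter> UI n J) \<union> (U ` (UI n I - F) \<union> (V' - UI n J)))"
      by (rule emeasure_mono[OF sub]) (use D1 D2 D3 in auto)
    also have "\<dots> \<le> emeasure M (U ` UI n I \<inter> UI n J) + emeasure M (U ` (UI n I - F) \<union> (V' - UI n J))"
      by (rule emeasure_subadditive) (use D1 D2 D3 in auto)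
    also have "emeasure M (U ` (UI n I - F) \<union> (V' - UI n J)) \<le>
        emeasure M (U ` (UI n I - F)) + emeasure M (V' - UI n J)"
      by (rule emeasure_subadditive[OF D2 D3])
    also have "emeasure M (U ` (UI n I - F)) \<le> ennreal A' * emeasure M (UI n I - F)"
      by (rule bnd2) (use UIs F in auto)
    also have "\<dots> \<le> ennreal A' * ennreal \<epsilon>"
      using IJ(4) by (intro mult_left_mono) auto
    also have "emeasure M (U ` UI n I \<inter> UI n J) = (\<Sum>j\<in>J. emeasure M (U ` UI n I \<inter> L n j))"
      by (rule sum_UI[OF UUs IJ(2)])
    also have "\<dots> \<le> (\<Sum>j\<in>J. emeasure M (U ` B n))"
      by (rule sum_mono) (rule per_j[OF IJ(1)])
    also have "\<dots> = of_nat (card J) * emeasure M (U ` B n)" by simp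
    finally have fin1: "of_nat (card I) * emeasure M (U ` B n)
       \<le> of_nat (card J) * emeasure M (U ` B n) + (ennreal A' * ennreal \<epsilon> + emeasure M (V' - UI n J))"
      by (simp add: add.assoc)
    have "of_nat (card J) * emeasure M (U ` B n) + (ennreal A' * ennreal \<epsilon> + emeasure M (V' - UI n J))
       \<le> of_nat (card J) * emeasure M (U ` B n) + (ennreal A' * ennreal \<epsilon> + ennreal \<epsilon>)"
      using IJ(5) by (intro add_left_mono less_imp_le)
    with fin1 show ?thesis by (rule order_trans)
  qed
  show False
    by (rule arith_final[OF h1 h2 h3 h4 h5 a A e y0]) (use Ke in \<open>simp add: K_def\<close>)
qed

lemma main_ineq:
  assumes A: "A \<in> sets M"
  shows "emeasure M A \<le> emeasure M (U ` A)"
proof (cases "emeasure M (space M) = 0")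
  case True
  have "emeasure M A \<le> emeasure M (space M)" by (rule emeasure_mono) (use A sets.sets_into_space in auto)
  then show ?thesis using True by simp
next
  case False
  then have pos: "0 < emeasure M (space M)" by (simp add: zero_less_iff_neq_zero)
  obtain a A' where aA: "0 < a" "0 \<le> A'" and ae: "AE x in M. ennreal a \<le> f x \<and> f x \<le> ennreal A'"
    using sandwich[OF pos] by blast
  note bd = bounds[OF ae]
  show ?thesis
  proof (cases "emeasure M A = \<infinity>")
    case True
    have "ennreal a * emeasure M A \<le> emeasure M (U ` A)" by (rule bd(1)[OF A])
    then have "\<infinity> \<le> emeasure M (U ` A)" using True aA by (simp add: ennreal_mult_top)
    then have "emeasure M (U ` A) = \<infinity>" by (simp add: top_unique)
    then show ?thesis by simp
  next
    case False
    then have "emeasure M A < \<infinity>" by (simp add: less_top)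
    then show ?thesis using final[OF aA bd(1) bd(2) A] by blast
  qed
qed

end



lemma mp_of_commuting:
  assumes sf: "sigma_finite_measure M" and r1: "rank_one M T"
    and S: "invertible_nonsingular M S" and comm: "\<forall>x\<in>space M. S (T x) = T (S x)"
  shows "measure_preserving M S"
proof -
  have Timp: "invertible_measure_preserving M T" using r1 unfolding rank_one_def by (rule conjunct1)
  obtain B :: "nat \<Rightarrow> 'a set" and h :: "nat \<Rightarrow> nat" where Bh0: "(\<forall>n. rokhlin_column M T (B n) (h n)) \<and>
        (\<forall>A\<in>sets M. emeasure M A < \<infinity> \<longrightarrow>
          (\<forall>\<epsilon>>0. \<exists>N. \<forall>n\<ge>N. \<exists>I\<subseteq>{..<h n}.
             emeasure M ((A - (\<Union>i\<in>I. (T ^^ i) ` B n)) \<union> ((\<Union>i\<in>I. (T ^^ i) ` B n) - A))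
               < ennreal \<epsilon>))"
    using conjunct2[OF r1[unfolded rank_one_def]] by (elim exE) iprover
  note Bh = conjunct1[OF Bh0] conjunct2[OF Bh0]
  have Tim: "invertible_measurable M T" using Timp by (simp add: invertible_measure_preserving_def)
  have Sim: "invertible_measurable M S" using S by (simp add: invertible_nonsingular_def)
  let ?S' = "the_inv_into (space M) S"
  have ax: "R1_axioms M T B h"
  proof (rule R1_axioms.intro)
    show "invertible_measure_preserving M T" by (rule Timp)
    show "\<And>n. rokhlin_column M T (B n) (h n)" using Bh(1) by (rule spec)
    show "\<And>A. A \<in> sets M \<Longrightarrow> emeasure M A < \<infinity> \<Longrightarrow> \<forall>\<epsilon>>0. \<exists>N. \<forall>n\<ge>N. \<exists>I\<subseteq>{..<h n}.
             emeasure M ((A - (\<Union>i\<in>I. (T ^^ i) ` B n)) \<union> ((\<Union>i\<in>I. (T ^^ i) ` B n) - A))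
               < ennreal \<epsilon>" using Bh(2) by (intro allI impI) (rule Bh(2)[rule_format])
  qed
  have r1: "R1 M T B h" by (rule R1.intro[OF sf ax])
  interpret P: R2 M T B h S
    by (rule R2.intro[OF r1 R2_axioms.intro[OF S comm]])
  interpret Q: R2 M T B h ?S'
    by (rule R2.intro[OF r1 R2_axioms.intro[OF ns_inv[OF S] commute_inv[OF Sim Tim comm]]])
  have "emeasure M (S -` A \<inter> space M) = emeasure M A" if A: "A \<in> sets M" for A
  proof -
    have Asp: "A \<subseteq> space M" using sets.sets_into_space[OF A] .
    have eq: "S -` A \<inter> space M = ?S' ` A" by (rule im_preimage[OF Sim Asp])
    have C: "?S' ` A \<in> sets M" by (rule im_image_sets[OF im_inv[OF Sim] A])
    have 1: "emeasure M A \<le> emeasure M (?S' ` A)" by (rule Q.main_ineq[OF A])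
    have "emeasure M (?S' ` A) \<le> emeasure M (S ` (?S' ` A))" by (rule P.main_ineq[OF C])
    also have "S ` (?S' ` A) = A" by (rule im_image_inv(1)[OF Sim Asp])
    finally show ?thesis using 1 eq by simp
  qed
  then show ?thesis using im_basic(3)[OF Sim] by (simp add: measure_preserving_def)
qed


theorem mainTheorem7:
  fixes M :: "'a measure" and f :: "'a \<Rightarrow> 'b::polish_space"
    and T S :: "'a \<Rightarrow> 'a"
  assumes "sigma_finite_measure M"
    and "borel_iso M f"
    and "nonatomic M"
    and "rank_one M T"
    and "invertible_nonsingular M S"
    and "\<forall>x\<in>space M. S (T x) = T (S x)"
  shows "measure_preserving M S \<and> \<not> squashable M T"
proof
  show "measure_preserving M S" by (rule mp_of_commuting[OF assms(1) assms(4) assms(5) assms(6)])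
  show "\<not> squashable M T"
  proof
    assume "squashable M T"
    then obtain S0 where S0: "invertible_nonsingular M S0" "\<not> measure_preserving M S0"
      "\<forall>x\<in>space M. S0 (T x) = T (S0 x)"
      unfolding squashable_def by blast
    then show False using mp_of_commuting[OF assms(1) assms(4) S0(1) S0(3)] by simp
  qed
qed

end
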